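(* Let $\alpha$ be Diophantine, $\theta\in\mathbb{R}$ and $\epsilon_0>0$. There exists $c=c(\alpha,\epsilon_0)>0$ such that, with $0=n_0,n_1,n_2,\dots$ the $\epsilon_0$-resonances associated to $\alpha$ and $\theta$ ordered so that $|n_0|<|n_1|\le|n_2|\le\cdots$ (with the convention $|n_{j+1}|=\infty$ if $n_j$ is the last resonance), one has for every $j$ $$|n_{j+1}|\ge c\,\|2\theta-n_j\alpha\|_{\mathbb{R}/\mathbb{Z}}^{-c}\ge c\,e^{c\epsilon_0|n_j|}.$$
   Context: An irrational $\alpha$ is Diophantine if $\sup_n\ln q_{n+1}/\ln q_n<\infty$, where $q_n$ are the denominators of its continued fraction approximants. $\|\cdot\|_{\mathbb{R}/\mathbb{Z}}$ is the distance to the nearest integer. Given $\alpha,\theta,\epsilon_0$, an integer $k$ is an $\epsilon_0$-resonance if $\|2\theta-k\alpha\|_{\mathbb{R}/\mathbb{Z}}\le e^{-|k|\epsilon_0}$ and $\|2\theta-k\alpha\|_{\mathbb{R}/\mathbb{Z}}=\min_{|j|\le|k|}\|2\theta-j\alpha\|_{\mathbb{R}/\mathbb{Z}}$ ($0$ is always a resonance). *)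

theory Defs
  imports Complex_Main
begin

definition dZ :: "real \<Rightarrow> real" where
  "dZ x = min (frac x) (1 - frac x)"

text \<open>Continued fraction expansion of x: complete quotients, partial quotients a_n,
  and denominators q_n of the convergents (q_0 = 1, q_1 = a_1, q_(n+2) = a_(n+2) q_(n+1) + q_n).\<close>
fun cf_rem :: "real \<Rightarrow> nat \<Rightarrow> real" where
  "cf_rem x 0 = x"
| "cf_rem x (Suc n) = 1 / frac (cf_rem x n)"

definition cf_coeff :: "real \<Rightarrow> nat \<Rightarrow> int" where
  "cf_coeff x n = \<lfloor>cf_rem x n\<rfloor>"

fun cf_denom :: "real \<Rightarrow> nat \<Rightarrow> int" where
  "cf_denom x 0 = 1"
| "cf_denom x (Suc 0) = cf_coeff x 1"
| "cf_denom x (Suc (Suc n)) = cf_coeff x (Suc (Suc n)) * cf_denom x (Suc n) + cf_denom x n"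

definition diophantine :: "real \<Rightarrow> bool" where
  "diophantine \<alpha> \<longleftrightarrow> \<alpha> \<notin> \<rat> \<and>
     bdd_above (range (\<lambda>n. ln (real_of_int (cf_denom \<alpha> (Suc n))) / ln (real_of_int (cf_denom \<alpha> n))))"

definition resonance :: "real \<Rightarrow> real \<Rightarrow> real \<Rightarrow> int \<Rightarrow> bool" where
  "resonance \<alpha> \<theta> \<epsilon>0 k \<longleftrightarrow>
     dZ (2 * \<theta> - of_int k * \<alpha>) \<le> exp (- of_int \<bar>k\<bar> * \<epsilon>0) \<and>
     (\<forall>j. \<bar>j\<bar> \<le> \<bar>k\<bar> \<longrightarrow> dZ (2 * \<theta> - of_int k * \<alpha>) \<le> dZ (2 * \<theta> - of_int j * \<alpha>))"

end

theory Submission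
  imports Defs
begin

fun QQ :: "real \<Rightarrow> nat \<Rightarrow> int" where
  "QQ x 0 = 0" | "QQ x (Suc 0) = 1"
| "QQ x (Suc (Suc n)) = cf_coeff x (Suc n) * QQ x (Suc n) + QQ x n"

fun PP :: "real \<Rightarrow> nat \<Rightarrow> int" where
  "PP x 0 = 1" | "PP x (Suc 0) = cf_coeff x 0"
| "PP x (Suc (Suc n)) = cf_coeff x (Suc n) * PP x (Suc n) + PP x n"

fun DD :: "real \<Rightarrow> nat \<Rightarrow> real" where
  "DD x 0 = 1" | "DD x (Suc n) = DD x n * frac (cf_rem x n)"

lemma cf_denom_QQ: "cf_denom x n = QQ x (Suc n)"
  by (induction x n rule: cf_denom.induct) auto

lemma irr_rem: assumes "x \<notin> \<rat>" shows "cf_rem x n \<notin> \<rat>"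
proof (induction n)
  case 0 then show ?case using assms by simp
next
  case (Suc n)
  show ?case
  proof
    assume "cf_rem x (Suc n) \<in> \<rat>"
    then have "1 / frac (cf_rem x n) \<in> \<rat>" by simp
    then have "inverse (1 / frac (cf_rem x n)) \<in> \<rat>" by (rule Rats_inverse)
    then have "frac (cf_rem x n) \<in> \<rat>" by (simp add: inverse_eq_divide)
    then have "frac (cf_rem x n) + of_int \<lfloor>cf_rem x n\<rfloor> \<in> \<rat>" by (simp add: Rats_add)
    then show False using Suc by (simp add: frac_def)
  qed
qed

lemma frac_pos: assumes "x \<notin> \<rat>" shows "0 < frac (cf_rem x n)" "frac (cf_rem x n) < 1"
proof -
  have "frac (cf_rem x n) \<noteq> 0" using irr_rem[OF assms, of n] using frac_eq_0_iff Ints_subset_Rats by blast 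
  then show "0 < frac (cf_rem x n)" using frac_ge_0 by (metis order_le_less)
  show "frac (cf_rem x n) < 1" by (rule frac_lt_1)
qed

lemma coeff_ge1: assumes "x \<notin> \<rat>" shows "cf_coeff x (Suc n) \<ge> 1"
proof -
  have "cf_rem x (Suc n) > 1" using frac_pos[OF assms, of n] by (simp add: field_simps)
  then show ?thesis unfolding cf_coeff_def by linarith
qed

lemma frac_rec: assumes "x \<notin> \<rat>"
  shows "frac (cf_rem x (Suc n)) = 1 / frac (cf_rem x n) - cf_coeff x (Suc n)"
  unfolding cf_coeff_def by (simp add: frac_def)

lemma DD_pos: assumes "x \<notin> \<rat>" shows "DD x n > 0"
  by (induction n) (use frac_pos[OF assms] in auto)

lemma DD_rec: assumes "x \<notin> \<rat>"
  shows "DD x (Suc (Suc n)) = DD x n - cf_coeff x (Suc n) * DD x (Suc n)"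
proof -
  have b: "frac (cf_rem x n) \<noteq> 0" using frac_pos[OF assms, of n] by simp
  have "DD x (Suc (Suc n)) = DD x n * frac (cf_rem x n) * frac (cf_rem x (Suc n))" by (simp only: DD.simps)
  also have "\<dots> = DD x n * frac (cf_rem x n) * (1 / frac (cf_rem x n) - cf_coeff x (Suc n))"
    by (simp only: frac_rec[OF assms])
  also have "\<dots> = DD x n - cf_coeff x (Suc n) * DD x (Suc n)" using b by (simp del: cf_rem.simps add: field_simps)
  finally show ?thesis .
qed

lemma DD_mono: assumes "x \<notin> \<rat>" shows "DD x (Suc n) \<le> DD x n"
  using DD_pos[OF assms, of n] frac_pos[OF assms, of n] by (simp add: mult_le_cancel_left1)

lemma E_eq: assumes "x \<notin> \<rat>"
  shows "of_int (QQ x n) * x - of_int (PP x n) = (-1)^(Suc n) * DD x n"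
proof -
  have "\<forall>k. of_int (QQ x k) * x - of_int (PP x k) = (-1)^(Suc k) * DD x k \<and>
      of_int (QQ x (Suc k)) * x - of_int (PP x (Suc k)) = (-1)^(Suc (Suc k)) * DD x (Suc k)"
  proof
    fix k show "of_int (QQ x k) * x - of_int (PP x k) = (-1)^(Suc k) * DD x k \<and>
      of_int (QQ x (Suc k)) * x - of_int (PP x (Suc k)) = (-1)^(Suc (Suc k)) * DD x (Suc k)"
    proof (induction k)
      case 0 then show ?case by (simp add: frac_def cf_coeff_def)
    next
      case (Suc k)
      then have h1: "of_int (QQ x k) * x - of_int (PP x k) = (-1)^(Suc k) * DD x k"
        and h2: "of_int (QQ x (Suc k)) * x - of_int (PP x (Suc k)) = (-1)^(Suc (Suc k)) * DD x (Suc k)" by auto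
      have "of_int (QQ x (Suc (Suc k))) * x - of_int (PP x (Suc (Suc k)))
         = of_int (cf_coeff x (Suc k)) * (of_int (QQ x (Suc k)) * x - of_int (PP x (Suc k)))
           + (of_int (QQ x k) * x - of_int (PP x k))" by (simp add: algebra_simps)
      also have "\<dots> = (-1)^(Suc (Suc (Suc k))) * DD x (Suc (Suc k))"
        unfolding h1 h2 DD_rec[OF assms] by (simp add: algebra_simps)
      finally show ?case using h2 by simp
    qed
  qed
  then show ?thesis by blast
qed

lemma det: "QQ x (Suc n) * PP x n - QQ x n * PP x (Suc n) = (-1)^n"
proof (induction n)
  case 0 then show ?case by simp
next
  case (Suc n)
  have "QQ x (Suc (Suc n)) * PP x (Suc n) - QQ x (Suc n) * PP x (Suc (Suc n))
     = - (QQ x (Suc n) * PP x n - QQ x n * PP x (Suc n))" by (simp add: algebra_simps)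
  then show ?case using Suc by simp
qed

lemma ident: assumes "x \<notin> \<rat>" shows "of_int (QQ x (Suc n)) * DD x n + of_int (QQ x n) * DD x (Suc n) = 1"
proof (induction n)
  case 0 then show ?case by simp
next
  case (Suc n)
  show ?case using Suc by (simp del: DD.simps cf_rem.simps add: DD_rec[OF assms] algebra_simps)
qed

lemma QQ_nonneg: assumes "x \<notin> \<rat>" shows "QQ x n \<ge> 0 \<and> QQ x (Suc n) \<ge> 1 \<and> QQ x (Suc n) \<ge> int n \<and> (n \<ge> 1 \<longrightarrow> QQ x n \<ge> 1)"
proof (induction n)
  case 0 then show ?case by simp
next
  case (Suc n)
  have c: "cf_coeff x (Suc n) \<ge> 1" by (rule coeff_ge1[OF assms])
  have m: "cf_coeff x (Suc n) * QQ x (Suc n) \<ge> QQ x (Suc n)" using c Suc by (simp add: mult_le_cancel_right1)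
  have o: "n \<ge> 1 \<Longrightarrow> QQ x n \<ge> 1" using Suc by auto
  have e: "QQ x (Suc (Suc n)) = cf_coeff x (Suc n) * QQ x (Suc n) + QQ x n" by simp
  have "QQ x (Suc (Suc n)) \<ge> 1 + int n"
  proof (cases "n = 0")
    case True then show ?thesis using e m Suc by simp
  next
    case False then show ?thesis using e m Suc o by linarith
  qed
  then show ?case using Suc by auto
qed

lemma QQ_mono: assumes "x \<notin> \<rat>" shows "QQ x n \<le> QQ x (Suc n)"
proof (cases n)
  case 0 then show ?thesis by simp
next
  case (Suc k)
  have c: "cf_coeff x (Suc k) \<ge> 1" by (rule coeff_ge1[OF assms])
  have "cf_coeff x (Suc k) * QQ x (Suc k) \<ge> QQ x (Suc k)" using c QQ_nonneg[OF assms, of k] by (simp add: mult_le_cancel_right1)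
  moreover have "QQ x (Suc (Suc k)) = cf_coeff x (Suc k) * QQ x (Suc k) + QQ x k" by simp
  ultimately show ?thesis unfolding Suc using QQ_nonneg[OF assms, of k] by linarith
qed

lemma QQ_mono': assumes "x \<notin> \<rat>" "m \<le> n" shows "QQ x m \<le> QQ x n"
  using assms(2) by (induction rule: dec_induct) (use QQ_mono[OF assms(1)] order_trans in blast)+

lemma pos_sum_abs: fixes u v :: real assumes "u * v > 0" shows "\<bar>u + v\<bar> \<ge> \<bar>u\<bar>"
  using assms by (auto simp: zero_less_mult_iff)

lemma best_approx:
  assumes irr: "x \<notin> \<rat>" and m0: "m \<noteq> 0" and mlt: "\<bar>m\<bar> < QQ x (Suc n)"
  shows "DD x n \<le> \<bar>of_int m * x - of_int p\<bar>"
proof -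
  define s :: int where "s = (-1)^n"
  have ss: "s * s = 1" unfolding s_def by (simp add: power_mult_distrib[symmetric])
  have dt: "QQ x (Suc n) * PP x n - QQ x n * PP x (Suc n) = s" unfolding s_def by (rule det)
  define a where "a = - s * (m * PP x (Suc n) - p * QQ x (Suc n))"
  define b where "b = - s * (p * QQ x n - m * PP x n)"
  have "a * QQ x n + b * QQ x (Suc n) = s * m * (QQ x (Suc n) * PP x n - QQ x n * PP x (Suc n))"
    unfolding a_def b_def by (simp add: algebra_simps)
  then have mm: "m = a * QQ x n + b * QQ x (Suc n)" using dt ss by (simp add: mult.assoc)
  have "a * PP x n + b * PP x (Suc n) = s * p * (QQ x (Suc n) * PP x n - QQ x n * PP x (Suc n))"
    unfolding a_def b_def by (simp add: algebra_simps)
  then have pp: "p = a * PP x n + b * PP x (Suc n)" using dt ss by (simp add: mult.assoc)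
  define e where "e k = of_int (QQ x k) * x - of_int (PP x k)" for k
  have ee: "e k = (-1)^(Suc k) * DD x k" for k unfolding e_def by (rule E_eq[OF irr])
  have lin: "of_int m * x - of_int p = of_int a * e n + of_int b * e (Suc n)"
    unfolding mm pp e_def by (simp add: algebra_simps)
  have absE: "\<bar>e n\<bar> = DD x n" using ee[of n] DD_pos[OF irr, of n] by (simp add: abs_mult)
  have prodE: "e n * e (Suc n) < 0"
  proof -
    have "e n * e (Suc n) = - (DD x n * DD x (Suc n))"
      unfolding ee by (simp add: algebra_simps power_mult_distrib[symmetric] flip: power_add)
    then show ?thesis using DD_pos[OF irr, of n] DD_pos[OF irr, of "Suc n"] by simp
  qed
  have q0: "QQ x n \<ge> 0" and q1: "QQ x (Suc n) \<ge> 1" using QQ_nonneg[OF irr, of n] by auto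
  show ?thesis
  proof (cases "b = 0")
    case True
    then have "a \<noteq> 0" using mm m0 by auto
    then have "\<bar>of_int a :: real\<bar> \<ge> 1" by linarith
    then have "\<bar>of_int a * e n\<bar> \<ge> \<bar>e n\<bar>" by (simp add: abs_mult mult_le_cancel_right1)
    then show ?thesis using lin True absE by simp
  next
    case bn: False
    have "a \<noteq> 0"
    proof
      assume "a = 0"
      then have "\<bar>m\<bar> = \<bar>b\<bar> * QQ x (Suc n)" using mm q1 by (simp add: abs_mult)
      moreover have "\<bar>b\<bar> * QQ x (Suc n) \<ge> QQ x (Suc n)" using bn q1 by (simp add: mult_le_cancel_right1)
      ultimately show False using mlt by linarith
    qed
    have "a * b < 0"
    proof (rule ccontr)
      assume "\<not> a * b < 0"
      then have "(a > 0 \<and> b > 0) \<or> (a < 0 \<and> b < 0)" using bn \<open>a \<noteq> 0\<close>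
        by (auto simp: not_less zero_le_mult_iff)
      then show False
      proof
        assume h: "a > 0 \<and> b > 0"
        have "a * QQ x n \<ge> 0" using h q0 by simp
        moreover have "b * QQ x (Suc n) \<ge> QQ x (Suc n)" using h q1 by (simp add: mult_le_cancel_right1)
        ultimately show False using mm mlt by linarith
      next
        assume h: "a < 0 \<and> b < 0"
        have "a * QQ x n \<le> 0" using h q0 by (simp add: mult_nonpos_nonneg)
        moreover have "b * QQ x (Suc n) \<le> - QQ x (Suc n)" using h q1
          by (smt (verit) mult_le_cancel_right1 mult_minus_left)
        ultimately show False using mm mlt by linarith
      qed
    qed
    then have "(of_int a * e n) * (of_int b * e (Suc n)) > 0"
    proof -
      have "(of_int a * e n) * (of_int b * e (Suc n)) = of_int (a * b) * (e n * e (Suc n))"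
        by (simp add: algebra_simps)
      moreover have "(of_int (a * b) :: real) < 0" using \<open>a * b < 0\<close> by linarith
      then have "of_int (a * b) * (e n * e (Suc n)) > 0" using prodE by (rule mult_neg_neg)
      ultimately show ?thesis by linarith
    qed
    then have "\<bar>of_int a * e n + of_int b * e (Suc n)\<bar> \<ge> \<bar>of_int a * e n\<bar>" by (rule pos_sum_abs)
    moreover have "\<bar>of_int a :: real\<bar> \<ge> 1" using \<open>a \<noteq> 0\<close> by linarith
    then have "\<bar>of_int a * e n\<bar> \<ge> \<bar>e n\<bar>" by (simp add: abs_mult mult_le_cancel_right1)
    ultimately show ?thesis using lin absE by simp
  qed
qed

lemma dZ_le: "dZ z \<le> \<bar>z - of_int n\<bar>"
proof -
  have z: "z = of_int \<lfloor>z\<rfloor> + frac z" by (simp add: frac_def)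
  show ?thesis
  proof (cases "\<lfloor>z\<rfloor> \<ge> n")
    case True
    then have "\<bar>z - of_int n\<bar> \<ge> frac z" using z frac_ge_0[of z]
      by (smt (verit) of_int_le_iff)
    then show ?thesis unfolding dZ_def by linarith
  next
    case False
    then have "\<lfloor>z\<rfloor> + 1 \<le> n" by linarith
    then have "\<bar>z - of_int n\<bar> \<ge> 1 - frac z" using z frac_lt_1[of z]
      by (smt (verit) of_int_add of_int_le_iff of_int_1)
    then show ?thesis unfolding dZ_def by linarith
  qed
qed

lemma dZ_attained: "\<exists>n::int. dZ z = \<bar>z - of_int n\<bar>"
proof (cases "frac z \<le> 1 - frac z")
  case True
  then have "dZ z = \<bar>z - of_int \<lfloor>z\<rfloor>\<bar>" unfolding dZ_def using frac_ge_0[of z] by (simp add: frac_def)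
  then show ?thesis by blast
next
  case False
  then have "dZ z = \<bar>z - of_int (\<lfloor>z\<rfloor> + 1)\<bar>" unfolding dZ_def using frac_lt_1[of z] by (simp add: frac_def)
  then show ?thesis by blast
qed

lemma dZ_nonneg: "dZ z \<ge> 0" unfolding dZ_def using frac_ge_0[of z] frac_lt_1[of z] by simp

lemma dZ_tri: "dZ (u - v) \<le> dZ u + dZ v"
proof -
  obtain p r :: int where p: "dZ u = \<bar>u - of_int p\<bar>" and r: "dZ v = \<bar>v - of_int r\<bar>"
    using dZ_attained by metis
  have "dZ (u - v) \<le> \<bar>u - v - of_int (p - r)\<bar>" by (rule dZ_le)
  also have "\<dots> \<le> \<bar>u - of_int p\<bar> + \<bar>v - of_int r\<bar>" by simp
  finally show ?thesis using p r by simp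
qed

lemma dZ_lower_QQ:
  assumes irr: "x \<notin> \<rat>" and m0: "m \<noteq> 0" and mlt: "\<bar>m\<bar> < QQ x (Suc n)"
  shows "DD x n \<le> dZ (of_int m * x)"
proof -
  obtain p :: int where "dZ (of_int m * x) = \<bar>of_int m * x - of_int p\<bar>" using dZ_attained by blast
  then show ?thesis using best_approx[OF assms] by simp
qed

lemma DD_lower: assumes irr: "x \<notin> \<rat>" shows "DD x n \<ge> 1 / (2 * of_int (QQ x (Suc n)))"
proof -
  have q0: "QQ x n \<ge> 0" and q1: "QQ x (Suc n) \<ge> 1" using QQ_nonneg[OF irr, of n] by auto
  have qm: "QQ x n \<le> QQ x (Suc n)" by (rule QQ_mono[OF irr])
  have "1 = of_int (QQ x (Suc n)) * DD x n + of_int (QQ x n) * DD x (Suc n)" using ident[OF irr, of n] by simp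
  also have "\<dots> \<le> of_int (QQ x (Suc n)) * DD x n + of_int (QQ x n) * DD x n"
    using DD_mono[OF irr, of n] q0 by (simp add: mult_left_mono)
  also have "\<dots> \<le> 2 * of_int (QQ x (Suc n)) * DD x n"
    using qm DD_pos[OF irr, of n] by (simp add: algebra_simps mult_right_mono)
  finally have "1 \<le> 2 * of_int (QQ x (Suc n)) * DD x n" .
  then show ?thesis using q1 by (simp add: field_simps)
qed

lemma dioph_bound:
  assumes "diophantine x"
  shows "\<exists>C \<tau>. C > 0 \<and> \<tau> \<ge> 1 \<and> (\<forall>m::int. m \<noteq> 0 \<longrightarrow> dZ (of_int m * x) \<ge> C * \<bar>of_int m\<bar> powr (- \<tau>))"
proof -
  have irr: "x \<notin> \<rat>" using assms unfolding diophantine_def by blast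
  obtain B where B: "\<And>n. ln (real_of_int (cf_denom x (Suc n))) / ln (real_of_int (cf_denom x n)) \<le> B"
    using assms unfolding diophantine_def bdd_above_def by blast
  define \<tau> where "\<tau> = max B 1"
  define K where "K = real_of_int (QQ x 3)"
  have Q3: "QQ x 3 \<ge> 2" using QQ_nonneg[OF irr, of 2] by (simp add: numeral_3_eq_3)
  then have K1: "K \<ge> 1" unfolding K_def by simp
  have Qb: "real_of_int (QQ x (Suc n)) \<le> K * real_of_int (QQ x n) powr \<tau>" if n1: "n \<ge> 1" for n
  proof -
    have qn1: "QQ x n \<ge> 1" using QQ_nonneg[OF irr, of n] n1 by auto
    show ?thesis
    proof (cases "QQ x n \<ge> 2")
      case True
      obtain k where k: "n = Suc k" using n1 by (cases n) auto
      have lp: "ln (real_of_int (QQ x n)) > 0" using True by simp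
      have "ln (real_of_int (QQ x (Suc n))) / ln (real_of_int (QQ x n)) \<le> B"
        using B[of k] unfolding cf_denom_QQ k by simp
      then have "ln (real_of_int (QQ x (Suc n))) \<le> B * ln (real_of_int (QQ x n))"
        using lp by (simp add: divide_le_eq)
      also have "\<dots> \<le> \<tau> * ln (real_of_int (QQ x n))" using lp unfolding \<tau>_def
        by (simp add: mult_right_mono)
      finally have "exp (ln (real_of_int (QQ x (Suc n)))) \<le> exp (\<tau> * ln (real_of_int (QQ x n)))" by simp
      moreover have "QQ x (Suc n) \<ge> 1" using QQ_nonneg[OF irr, of n] by auto
      ultimately have "real_of_int (QQ x (Suc n)) \<le> real_of_int (QQ x n) powr \<tau>"
        using qn1 by (simp add: powr_def)
      moreover have "real_of_int (QQ x n) powr \<tau> \<ge> 0" by simp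
      ultimately show ?thesis using K1 by (smt (verit) mult_le_cancel_right1)
    next
      case False
      then have qe: "QQ x n = 1" using qn1 by simp
      have "n \<le> 2"
      proof (rule ccontr)
        assume "\<not> n \<le> 2"
        then have "QQ x 3 \<le> QQ x n" using QQ_mono'[OF irr, of 3 n] by simp
        then show False using Q3 qe by simp
      qed
      then have "QQ x (Suc n) \<le> QQ x 3" using QQ_mono'[OF irr, of "Suc n" 3] by simp
      then show ?thesis using qe unfolding K_def by simp
    qed
  qed
  have main: "dZ (of_int m * x) \<ge> (1 / (2 * K)) * \<bar>of_int m\<bar> powr (- \<tau>)" if m0: "m \<noteq> 0" for m :: int
  proof -
    define N where "N = (LEAST N. \<bar>m\<bar> < QQ x N)"
    have ex: "\<bar>m\<bar> < QQ x (Suc (Suc (nat \<bar>m\<bar>)))" using QQ_nonneg[OF irr, of "Suc (nat \<bar>m\<bar>)"] by simp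
    then have NN: "\<bar>m\<bar> < QQ x N" unfolding N_def by (rule LeastI)
    have N0: "N \<noteq> 0" proof assume "N = 0" with NN show False by simp qed
    have N1: "N \<noteq> 1" using NN m0 by auto
    obtain n where n: "N = Suc n" and n1: "n \<ge> 1" using N0 N1 by (cases N) auto
    have "\<not> \<bar>m\<bar> < QQ x n" using not_less_Least[of n "\<lambda>N. \<bar>m\<bar> < QQ x N"] n unfolding N_def by simp
    then have qm: "real_of_int (QQ x n) \<le> \<bar>of_int m\<bar>" by simp
    have qn1: "QQ x n \<ge> 1" using QQ_nonneg[OF irr, of n] n1 by auto
    have "dZ (of_int m * x) \<ge> DD x n" using dZ_lower_QQ[OF irr m0] NN n by simp
    moreover have "DD x n \<ge> 1 / (2 * of_int (QQ x (Suc n)))" by (rule DD_lower[OF irr])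
    moreover have "2 * of_int (QQ x (Suc n)) \<le> 2 * (K * \<bar>of_int m\<bar> powr \<tau>)"
    proof -
      have "real_of_int (QQ x n) powr \<tau> \<le> \<bar>of_int m\<bar> powr \<tau>"
        using qm qn1 unfolding \<tau>_def by (intro powr_mono2) auto
      then have "K * real_of_int (QQ x n) powr \<tau> \<le> K * \<bar>of_int m\<bar> powr \<tau>" using K1 by simp
      then show ?thesis using Qb[OF n1] by simp
    qed
    moreover have "QQ x (Suc n) \<ge> 1" using QQ_nonneg[OF irr, of n] by auto
    ultimately have "dZ (of_int m * x) \<ge> 1 / (2 * (K * \<bar>of_int m\<bar> powr \<tau>))"
      by (smt (verit) frac_le of_int_0_less_iff)
    also have "1 / (2 * (K * \<bar>of_int m\<bar> powr \<tau>)) = (1 / (2 * K)) * \<bar>of_int m\<bar> powr (- \<tau>)"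
      using m0 by (simp add: powr_minus field_simps)
    finally show ?thesis .
  qed
  show ?thesis
    by (rule exI[of _ "1 / (2 * K)"], rule exI[of _ \<tau>]) (use K1 main in \<open>auto simp: \<tau>_def\<close>)
qed

lemma dZ_half: "dZ z \<le> 1/2" unfolding dZ_def by (auto simp: min_def)

theorem lemma3p1:
  fixes \<alpha> \<epsilon>0 :: real
  assumes "diophantine \<alpha>" and "\<epsilon>0 > 0"
  shows "\<exists>c>0. \<forall>\<theta>::real. \<forall>k. resonance \<alpha> \<theta> \<epsilon>0 k \<longrightarrow>
           (dZ (2 * \<theta> - of_int k * \<alpha>) > 0 \<longrightarrow>
              c * dZ (2 * \<theta> - of_int k * \<alpha>) powr (- c) \<ge> c * exp (c * \<epsilon>0 * of_int \<bar>k\<bar>)) \<and>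
           (\<forall>k'. resonance \<alpha> \<theta> \<epsilon>0 k' \<and> k' \<noteq> k \<and> \<bar>k\<bar> \<le> \<bar>k'\<bar> \<longrightarrow>
              of_int \<bar>k'\<bar> \<ge> c * dZ (2 * \<theta> - of_int k * \<alpha>) powr (- c))"
proof -
  obtain C \<tau> where C: "C > 0" and tau: "\<tau> \<ge> 1"
    and DB: "\<And>m::int. m \<noteq> 0 \<Longrightarrow> dZ (of_int m * \<alpha>) \<ge> C * \<bar>of_int m\<bar> powr (- \<tau>)"
    using dioph_bound[OF assms(1)] by blast
  define A where "A = (1/2) * (C/2) powr (1/\<tau>)"
  have A0: "A > 0" unfolding A_def using C by simp
  define c where "c = min (1/\<tau>) A"
  have c0: "c > 0" unfolding c_def using A0 tau by simp
  have cle: "c \<le> 1/\<tau>" "c \<le> A" unfolding c_def by auto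
  have "\<forall>\<theta>::real. \<forall>k. resonance \<alpha> \<theta> \<epsilon>0 k \<longrightarrow>
           (dZ (2 * \<theta> - of_int k * \<alpha>) > 0 \<longrightarrow>
              c * dZ (2 * \<theta> - of_int k * \<alpha>) powr (- c) \<ge> c * exp (c * \<epsilon>0 * of_int \<bar>k\<bar>)) \<and>
           (\<forall>k'. resonance \<alpha> \<theta> \<epsilon>0 k' \<and> k' \<noteq> k \<and> \<bar>k\<bar> \<le> \<bar>k'\<bar> \<longrightarrow>
              of_int \<bar>k'\<bar> \<ge> c * dZ (2 * \<theta> - of_int k * \<alpha>) powr (- c))"
  proof (intro allI impI conjI)
    fix \<theta> :: real and k :: int
    assume rk: "resonance \<alpha> \<theta> \<epsilon>0 k"
    define d where "d = dZ (2 * \<theta> - of_int k * \<alpha>)"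
    have dle: "d \<le> exp (- of_int \<bar>k\<bar> * \<epsilon>0)" using rk unfolding resonance_def d_def by blast
    {
      assume dp: "d > 0"
      have "ln d \<le> - of_int \<bar>k\<bar> * \<epsilon>0" using ln_le_cancel_iff[of d "exp (- of_int \<bar>k\<bar> * \<epsilon>0)"] dle dp by simp
      then have "c * \<epsilon>0 * of_int \<bar>k\<bar> \<le> - c * ln d" using c0
        by (smt (verit, ccfv_SIG) mult.assoc mult_left_mono mult_minus_right mult.commute)
      then have "exp (c * \<epsilon>0 * of_int \<bar>k\<bar>) \<le> d powr (- c)" using dp by (simp add: powr_def)
      then show "c * d powr (- c) \<ge> c * exp (c * \<epsilon>0 * of_int \<bar>k\<bar>)" using c0 by simp
    }
    fix k' assume h: "resonance \<alpha> \<theta> \<epsilon>0 k' \<and> k' \<noteq> k \<and> \<bar>k\<bar> \<le> \<bar>k'\<bar>"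
    show "of_int \<bar>k'\<bar> \<ge> c * d powr (- c)"
    proof (cases "d = 0")
      case True then show ?thesis by simp
    next
      case False
      then have dp: "d > 0" using dZ_nonneg[of "2 * \<theta> - of_int k * \<alpha>"] unfolding d_def by simp
      have d1: "d < 1" using dZ_half[of "2 * \<theta> - of_int k * \<alpha>"] unfolding d_def by simp
      have d'le: "dZ (2 * \<theta> - of_int k' * \<alpha>) \<le> d" using h unfolding resonance_def d_def by blast
      define m where "m = k' - k"
      have m0: "m \<noteq> 0" using h unfolding m_def by simp
      have "of_int m * \<alpha> = (2 * \<theta> - of_int k * \<alpha>) - (2 * \<theta> - of_int k' * \<alpha>)"
        unfolding m_def by (simp add: algebra_simps)
      then have "dZ (of_int m * \<alpha>) \<le> 2 * d" using dZ_tri[of "2 * \<theta> - of_int k * \<alpha>" "2 * \<theta> - of_int k' * \<alpha>"] d'le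
        unfolding d_def by simp
      with DB[OF m0] have Cm: "C * \<bar>of_int m\<bar> powr (- \<tau>) \<le> 2 * d" by linarith
      have mpos: "\<bar>real_of_int m\<bar> > 0" using m0 by simp
      have mk: "\<bar>real_of_int m\<bar> \<le> 2 * of_int \<bar>k'\<bar>" using h unfolding m_def by linarith
      have "C / (2 * d) \<le> \<bar>of_int m\<bar> powr \<tau>"
        using Cm mpos dp by (simp add: powr_minus field_simps)
      also have "\<dots> \<le> (2 * of_int \<bar>k'\<bar>) powr \<tau>" using mk tau by (intro powr_mono2) auto
      finally have "(C / (2 * d)) powr (1/\<tau>) \<le> ((2 * of_int \<bar>k'\<bar>) powr \<tau>) powr (1/\<tau>)"
        using C dp tau by (intro powr_mono2) auto
      also have "\<dots> = 2 * of_int \<bar>k'\<bar>" using tau by (simp add: powr_powr)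
      finally have k2: "(C / (2 * d)) powr (1/\<tau>) \<le> 2 * of_int \<bar>k'\<bar>" .
      have "(C / (2 * d)) powr (1/\<tau>) = (C/2) powr (1/\<tau>) * d powr (- (1/\<tau>))"
        using C dp by (simp add: powr_divide powr_minus_divide powr_mult field_simps)
      then have kk: "A * d powr (- (1/\<tau>)) \<le> of_int \<bar>k'\<bar>" using k2 unfolding A_def by simp
      have "d powr (- c) \<le> d powr (- (1/\<tau>))" using cle dp d1 by (intro powr_mono') auto
      then have "c * d powr (- c) \<le> A * d powr (- (1/\<tau>))" using cle c0
        by (intro mult_mono) auto
      then show ?thesis using kk by linarith
    qed
  qed
  then show ?thesis using c0 by blast
qed

end
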